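(* Let $(P,h)$ be a minimal floor plan. Then $B(P,h)\subseteq P$. In particular, if $(P,Q,h)$ is a minimal compatible floor plan, then $B(P,h)\subseteq P$ and $B(Q,h)\subseteq Q$.
   Context: A floor plan is a pair $(P,h)$ of sequences $P=(p_1,\dots,p_r)$, $p_i\in\mathbb{N}^2$, and $h=(h_1,\dots,h_r)$, $h_i$ positive integers; a compatible floor plan is a triple $(P,Q,h)$ with $(P,h),(Q,h)$ floor plans. "$q\in P$" means $q=p_i$ for some $i$. A North-East path is a sequence $(q_1,\dots,q_m)$ in $\mathbb{N}^2$ with $q_{j+1}-q_j\in\{(1,0),(0,1)\}$, originating at $q_1$; its score w.r.t. $(P,h)$ is $\sum_{i:\,p_i\in\{q_1,\dots,q_m\}}h_i$, and $\max\mathrm{score}_{(P,h)}(q)$ is the maximal score of a path originating at $q$. Let $\lambda_{(P,h)}=\{(x,y,z)\in\mathbb{N}^3: z<\max\mathrm{score}_{(P,h)}(x,y)\}$. For floor plans with the same $h$: $(P',h)\le(P,h)$ iff $\lambda_{(P',h)}\subseteq\lambda_{(P,h)}$. For compatible floor plans with the same $h$: $(P',Q',h)\le(P,Q,h)$ iff $\lambda_{(P',h)}\subseteq\lambda_{(P,h)}$, $\lambda_{(Q',h)}\subseteq\lambda_{(Q,h)}$, and $|\lambda_{(P',h)}\cap\lambda_{(Q',h)}|\le|\lambda_{(P,h)}\cap\lambda_{(Q,h)}|$. A (compatible) floor plan is minimal if it is minimal for these relations, i.e. there is no other one with the same $h$ that is $\le$ it but not $\ge$ it. The support is $\mathrm{supp}(P,h)=\{q\in\mathbb{N}^2:\max\mathrm{score}_{(P,h)}(q)>0\}$,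 and the border $B(P,h)$ is the set of $q\in\mathrm{supp}(P,h)$ such that $q+(1,0)\notin\mathrm{supp}(P,h)$ or $q+(0,1)\notin\mathrm{supp}(P,h)$. *)

theory Defs
  imports Main
begin

type_synonym pt = "nat \<times> nat"

definition floor_plan :: "pt list \<Rightarrow> nat list \<Rightarrow> bool" where
  "floor_plan P h \<longleftrightarrow> length P = length h \<and> (\<forall>i<length h. 0 < h ! i)"

definition compatible_floor_plan :: "pt list \<Rightarrow> pt list \<Rightarrow> nat list \<Rightarrow> bool" where
  "compatible_floor_plan P Q h \<longleftrightarrow> floor_plan P h \<and> floor_plan Q h"

definition NE_path :: "pt list \<Rightarrow> bool" where
  "NE_path qs \<longleftrightarrow> qs \<noteq> [] \<and>
     (\<forall>j. Suc j < length qs \<longrightarrow>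
        qs ! Suc j = (fst (qs ! j) + 1, snd (qs ! j)) \<or>
        qs ! Suc j = (fst (qs ! j), snd (qs ! j) + 1))"

definition score :: "pt list \<Rightarrow> nat list \<Rightarrow> pt list \<Rightarrow> nat" where
  "score P h qs = (\<Sum>i\<in>{i. i < length P \<and> P ! i \<in> set qs}. h ! i)"

definition maxscore :: "pt list \<Rightarrow> nat list \<Rightarrow> pt \<Rightarrow> nat" where
  "maxscore P h q = Max {score P h qs | qs. NE_path qs \<and> hd qs = q}"

definition lam :: "pt list \<Rightarrow> nat list \<Rightarrow> (nat \<times> nat \<times> nat) set" where
  "lam P h = {(x, y, z). z < maxscore P h (x, y)}"

definition fp_le :: "pt list \<Rightarrow> pt list \<Rightarrow> nat list \<Rightarrow> bool" where
  "fp_le P' P h \<longleftrightarrow> lam P' h \<subseteq> lam P h"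

definition cfp_le :: "pt list \<Rightarrow> pt list \<Rightarrow> pt list \<Rightarrow> pt list \<Rightarrow> nat list \<Rightarrow> bool" where
  "cfp_le P' Q' P Q h \<longleftrightarrow> lam P' h \<subseteq> lam P h \<and> lam Q' h \<subseteq> lam Q h \<and>
     card (lam P' h \<inter> lam Q' h) \<le> card (lam P h \<inter> lam Q h)"

definition minimal_floor_plan :: "pt list \<Rightarrow> nat list \<Rightarrow> bool" where
  "minimal_floor_plan P h \<longleftrightarrow> floor_plan P h \<and>
     (\<forall>P'. floor_plan P' h \<and> fp_le P' P h \<longrightarrow> fp_le P P' h)"

definition minimal_compatible_floor_plan :: "pt list \<Rightarrow> pt list \<Rightarrow> nat list \<Rightarrow> bool" where
  "minimal_compatible_floor_plan P Q h \<longleftrightarrow> compatible_floor_plan P Q h \<and>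
     (\<forall>P' Q'. compatible_floor_plan P' Q' h \<and> cfp_le P' Q' P Q h \<longrightarrow> cfp_le P Q P' Q' h)"

definition supp :: "pt list \<Rightarrow> nat list \<Rightarrow> pt set" where
  "supp P h = {q. maxscore P h q > 0}"

definition border :: "pt list \<Rightarrow> nat list \<Rightarrow> pt set" where
  "border P h = {q \<in> supp P h. (fst q + 1, snd q) \<notin> supp P h \<or> (fst q, snd q + 1) \<notin> supp P h}"

end

theory Submission imports Defs begin

definition step :: "pt \<Rightarrow> pt \<Rightarrow> bool" where
  "step p r \<longleftrightarrow> r = (fst p + 1, snd p) \<or> r = (fst p, snd p + 1)"

lemma NE_single[simp]: "NE_path [p]"
  by (simp add: NE_path_def)

lemma NE_Cons:
  "NE_path (p # qs) \<longleftrightarrow> qs = [] \<or> (NE_path qs \<and> step p (hd qs))"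
proof
  assume H: "NE_path (p # qs)"
  show "qs = [] \<or> (NE_path qs \<and> step p (hd qs))"
  proof (cases qs)
    case Nil then show ?thesis by simp
  next
    case (Cons a list)
    have "Suc 0 < length (p # qs)" using Cons by simp
    then have "(p # qs) ! Suc 0 = (fst ((p # qs) ! 0) + 1, snd ((p # qs) ! 0)) \<or>
               (p # qs) ! Suc 0 = (fst ((p # qs) ! 0), snd ((p # qs) ! 0) + 1)"
      using H unfolding NE_path_def by blast
    then have 1: "step p (hd qs)" using Cons by (simp add: step_def)
    have 2: "NE_path qs" unfolding NE_path_def
    proof (intro conjI allI impI)
      show "qs \<noteq> []" using Cons by simp
    next
      fix j assume "Suc j < length qs"
      then have "Suc (Suc j) < length (p # qs)" by simp
      then show "qs ! Suc j = (fst (qs ! j) + 1, snd (qs ! j)) \<or> qs ! Suc j = (fst (qs ! j), snd (qs ! j) + 1)"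
        using H unfolding NE_path_def by (metis nth_Cons_Suc)
    qed
    show ?thesis using 1 2 by simp
  qed
next
  assume H: "qs = [] \<or> (NE_path qs \<and> step p (hd qs))"
  show "NE_path (p # qs)" unfolding NE_path_def
  proof (intro conjI allI impI)
    show "p # qs \<noteq> []" by simp
  next
    fix j assume j: "Suc j < length (p # qs)"
    then have ne: "qs \<noteq> []" by auto
    with H have N: "NE_path qs" and S: "step p (hd qs)" by auto
    show "(p # qs) ! Suc j = (fst ((p # qs) ! j) + 1, snd ((p # qs) ! j)) \<or>
          (p # qs) ! Suc j = (fst ((p # qs) ! j), snd ((p # qs) ! j) + 1)"
    proof (cases j)
      case 0 then show ?thesis using S ne by (simp add: step_def hd_conv_nth)
    next
      case (Suc k)
      then have "Suc k < length qs" using j by simp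
      then show ?thesis using N Suc unfolding NE_path_def by simp
    qed
  qed
qed

lemma NE_append:
  "NE_path xs \<Longrightarrow> NE_path ys \<Longrightarrow> step (last xs) (hd ys) \<Longrightarrow> NE_path (xs @ ys)"
proof (induction xs)
  case Nil then show ?case by (simp add: NE_path_def)
next
  case (Cons a xs)
  show ?case
  proof (cases xs)
    case Nil then show ?thesis using Cons.prems by (simp add: NE_Cons)
  next
    case (Cons b zs)
    then have "NE_path xs" "step a (hd xs)" using Cons.prems(1) by (auto simp: NE_Cons)
    then have "NE_path (xs @ ys)" using Cons.IH Cons.prems \<open>xs = b # zs\<close> by simp
    then show ?thesis using \<open>step a (hd xs)\<close> \<open>xs = b # zs\<close> by (simp add: NE_Cons)
  qed
qed

lemma NE_prefix: "NE_path (xs @ ys) \<Longrightarrow> xs \<noteq> [] \<Longrightarrow> NE_path xs"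
proof (induction xs)
  case Nil then show ?case by simp
next
  case (Cons a xs)
  then show ?case
    by (cases xs) (auto simp: NE_Cons)
qed

lemma NE_suffix: "NE_path (xs @ ys) \<Longrightarrow> ys \<noteq> [] \<Longrightarrow> NE_path ys"
proof (induction xs)
  case Nil then show ?case by simp
next
  case (Cons a xs)
  then show ?case by (auto simp: NE_Cons)
qed

lemma NE_mono: "NE_path qs \<Longrightarrow> x \<in> set qs \<Longrightarrow> fst (hd qs) \<le> fst x \<and> snd (hd qs) \<le> snd x"
proof (induction qs)
  case Nil then show ?case by simp
next
  case (Cons a qs)
  show ?case
  proof (cases "x = a")
    case True then show ?thesis by simp
  next
    case False
    then have "x \<in> set qs" "qs \<noteq> []" using Cons.prems by auto
    then have "NE_path qs" "step a (hd qs)" using Cons.prems by (auto simp: NE_Cons)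
    then show ?thesis using Cons.IH \<open>x \<in> set qs\<close> by (auto simp: step_def)
  qed
qed

fun upath :: "nat \<Rightarrow> nat \<Rightarrow> nat \<Rightarrow> pt list" where
  "upath x y 0 = [(x, y)]"
| "upath x y (Suc n) = (x, y) # upath x (Suc y) n"

lemma upath_hd[simp]: "hd (upath x y n) = (x, y)"
  by (cases n) auto

lemma upath_ne[simp]: "upath x y n \<noteq> []"
  by (cases n) auto

lemma upath_NE: "NE_path (upath x y n)"
  by (induction n arbitrary: y) (auto simp: NE_Cons step_def)

lemma upath_set: "(x, y') \<in> set (upath x y n) \<longleftrightarrow> y \<le> y' \<and> y' \<le> y + n"
proof (induction n arbitrary: y)
  case 0 then show ?case by auto
next
  case (Suc n)
  have "(x, y') \<in> set (upath x y (Suc n)) \<longleftrightarrow> y' = y \<or> (Suc y \<le> y' \<and> y' \<le> Suc y + n)"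
    using Suc.IH[of "Suc y"] by simp
  also have "\<dots> \<longleftrightarrow> y \<le> y' \<and> y' \<le> y + Suc n" by linarith
  finally show ?case .
qed

lemma reach:
  "fst r \<le> X \<Longrightarrow> snd r \<le> Y \<Longrightarrow> \<exists>qs. NE_path qs \<and> hd qs = r \<and> (X, Y) \<in> set qs"
proof (induction "(X - fst r) + (Y - snd r)" arbitrary: r)
  case 0
  have "fst r = X" "snd r = Y" using 0 by linarith+
  then have "r = (X, Y)" by (simp add: prod_eq_iff)
  then show ?case by (intro exI[of _ "[r]"]) simp
next
  case (Suc n)
  show ?case
  proof (cases "fst r < X")
    case True
    have "n = (X - fst (fst r + 1, snd r)) + (Y - snd (fst r + 1, snd r))" using Suc.hyps(2) True by simp
    moreover have "fst (fst r + 1, snd r) \<le> X" "snd (fst r + 1, snd r) \<le> Y" using True Suc.prems by auto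
    ultimately obtain qs where "NE_path qs" "hd qs = (fst r + 1, snd r)" "(X, Y) \<in> set qs"
      using Suc.hyps(1) by blast
    then show ?thesis
      by (intro exI[of _ "r # qs"]) (auto simp: NE_Cons step_def)
  next
    case False
    then have "snd r < Y" using Suc by auto
    have "n = (X - fst (fst r, snd r + 1)) + (Y - snd (fst r, snd r + 1))" using Suc.hyps(2) False \<open>snd r < Y\<close> by simp
    moreover have "fst (fst r, snd r + 1) \<le> X" "snd (fst r, snd r + 1) \<le> Y" using \<open>snd r < Y\<close> Suc.prems by auto
    ultimately obtain qs where "NE_path qs" "hd qs = (fst r, snd r + 1)" "(X, Y) \<in> set qs"
      using Suc.hyps(1) by blast
    then show ?thesis
      by (intro exI[of _ "r # qs"]) (auto simp: NE_Cons step_def)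
  qed
qed


lemma score_le: "score P h qs \<le> (\<Sum>i<length P. h ! i)"
  unfolding score_def by (rule sum_mono2) auto

lemma scores_finite: "finite {score P h qs | qs. NE_path qs \<and> hd qs = q}"
  by (rule finite_subset[of _ "{..(\<Sum>i<length P. h ! i)}"]) (auto simp: score_le)

lemma scores_ne: "{score P h qs | qs. NE_path qs \<and> hd qs = q} \<noteq> {}"
  by (auto intro!: exI[of _ "[q]"])

lemma maxscore_ge: "NE_path qs \<Longrightarrow> hd qs = q \<Longrightarrow> score P h qs \<le> maxscore P h q"
  unfolding maxscore_def by (rule Max_ge[OF scores_finite]) auto

lemma maxscore_in: "\<exists>qs. NE_path qs \<and> hd qs = q \<and> maxscore P h q = score P h qs"
proof -
  have "maxscore P h q \<in> {score P h qs | qs. NE_path qs \<and> hd qs = q}"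
    unfolding maxscore_def by (rule Max_in[OF scores_finite scores_ne])
  then show ?thesis by auto
qed

lemma maxscore_le_total: "maxscore P h q \<le> (\<Sum>i<length P. h ! i)"
  using maxscore_in[of q P h] score_le by metis

lemma supp_point: "maxscore P h q > 0 \<Longrightarrow> \<exists>i<length P. fst q \<le> fst (P ! i) \<and> snd q \<le> snd (P ! i)"
proof -
  assume "maxscore P h q > 0"
  obtain qs where qs: "NE_path qs" "hd qs = q" "maxscore P h q = score P h qs"
    using maxscore_in by blast
  then have "score P h qs > 0" using \<open>maxscore P h q > 0\<close> by simp
  then obtain i where "i < length P" "P ! i \<in> set qs"
    unfolding score_def by (metis (no_types, lifting) mem_Collect_eq sum.neutral less_irrefl)
  then show ?thesis using NE_mono[OF qs(1)] qs(2) by blast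
qed

lemma point_supp:
  assumes "floor_plan P h" "i < length P" "fst q \<le> fst (P ! i)" "snd q \<le> snd (P ! i)"
  shows "maxscore P h q > 0"
proof -
  obtain qs where qs: "NE_path qs" "hd qs = q" "P ! i \<in> set qs"
    using reach[OF assms(3,4)] by auto
  have "h ! i > 0" using assms(1,2) by (simp add: floor_plan_def)
  have "h ! i \<le> score P h qs" unfolding score_def
    using qs(3) assms(2) by (intro member_le_sum) auto
  then show ?thesis using maxscore_ge[OF qs(1,2), of P h] \<open>h ! i > 0\<close> by linarith
qed

lemma finite_lam: "finite (lam P h)"
proof -
  let ?M = "sum_list (map fst P) + sum_list (map snd P)"
  let ?S = "(\<Sum>i<length P. h ! i)"
  have "lam P h \<subseteq> {..?M} \<times> {..?M} \<times> {..?S}"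
  proof
    fix t assume "t \<in> lam P h"
    then obtain x y z where t: "t = (x, y, z)" "z < maxscore P h (x, y)" unfolding lam_def by auto
    then obtain i where i: "i < length P" "x \<le> fst (P ! i)" "y \<le> snd (P ! i)"
      using supp_point[of P h "(x,y)"] by auto
    have "fst (P ! i) \<le> sum_list (map fst P)" "snd (P ! i) \<le> sum_list (map snd P)"
      using i(1) by (auto intro!: member_le_sum_list)
    then show "t \<in> {..?M} \<times> {..?M} \<times> {..?S}"
      using t i maxscore_le_total[of P h "(x,y)"] by auto
  qed
  then show ?thesis by (rule finite_subset) auto
qed


lemma core:
  assumes fp: "floor_plan P h"
    and qs: "maxscore P h (a, b) > 0"
    and qn: "\<not> maxscore P h (a + 1, b) > 0"
    and qP: "(a, b) \<notin> set P"
  shows "\<exists>P'. floor_plan P' h \<and> lam P' h \<subseteq> lam P h \<and> \<not> lam P h \<subseteq> lam P' h"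
proof -
  have col: "fst (P ! i) = a \<and> b < snd (P ! i)"
    if "i < length P" "a \<le> fst (P ! i)" "b \<le> snd (P ! i)" for i
  proof -
    have "fst (P ! i) = a"
    proof (rule ccontr)
      assume "fst (P ! i) \<noteq> a"
      then have "fst (a + 1, b) \<le> fst (P ! i)" using that by simp
      then show False using point_supp[OF fp that(1)] that(3) qn by simp
    qed
    moreover have "snd (P ! i) \<noteq> b"
    proof
      assume "snd (P ! i) = b"
      then have "P ! i = (a, b)" using \<open>fst (P ! i) = a\<close> by (simp add: prod_eq_iff)
      then show False using qP that(1) by (metis nth_mem)
    qed
    ultimately show ?thesis using that by simp
  qed
  obtain i0 where i0: "i0 < length P" "a \<le> fst (P ! i0)" "b \<le> snd (P ! i0)"
    using supp_point[OF qs] by auto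
  obtain j where j: "j < length P \<and> a \<le> fst (P ! j) \<and> b \<le> snd (P ! j)"
    and jmin: "\<And>i. i < length P \<and> a \<le> fst (P ! i) \<and> b \<le> snd (P ! i) \<Longrightarrow> snd (P ! j) \<le> snd (P ! i)"
    using ex_has_least_nat[of "\<lambda>i. i < length P \<and> a \<le> fst (P ! i) \<and> b \<le> snd (P ! i)" i0 "\<lambda>i. snd (P ! i)"] i0
    by blast
  have jc: "fst (P ! j) = a" "b < snd (P ! j)" using col j by auto
  define y1 where "y1 = snd (P ! j) - 1"
  have Pj: "P ! j = (a, Suc y1)" using jc y1_def by (simp add: prod_eq_iff)
  have by1: "b \<le> y1" using jc y1_def by simp
  have above: "fst (P ! i) = a \<and> Suc y1 \<le> snd (P ! i)"
    if "i < length P" "a \<le> fst (P ! i)" "b \<le> snd (P ! i)" for i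
    using col[OF that] jmin[of i] that Pj by simp
  define p' where "p' = (a, y1)"
  define P' where "P' = P[j := p']"
  have lenP': "length P' = length P" by (simp add: P'_def)
  have fp': "floor_plan P' h" using fp lenP' by (simp add: floor_plan_def)
  have P'j: "P' ! j = p'" using j by (simp add: P'_def)
  have P'i: "i \<noteq> j \<Longrightarrow> P' ! i = P ! i" for i by (simp add: P'_def)
  define N where "N = sum_list (map snd P)"
  have sndN: "i < length P \<Longrightarrow> snd (P ! i) \<le> N" for i
    unfolding N_def by (auto intro!: member_le_sum_list)
  define U where "U = upath a (Suc y1) N"
  have inU: "P ! i \<in> set U" if "i < length P" "a \<le> fst (P ! i)" "b \<le> snd (P ! i)" for i
  proof -
    have "P ! i = (a, snd (P ! i))" using above[OF that] by (simp add: prod_eq_iff)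
    then show ?thesis unfolding U_def using upath_set above[OF that] sndN[OF that(1)]
      by (metis add.commute trans_le_add2)
  qed
  have finI: "finite {i. i < length P \<and> X i}" for X by simp
  have A: "maxscore P' h r \<le> maxscore P h r" for r
  proof -
    obtain qs where qs: "NE_path qs" "hd qs = r" "maxscore P' h r = score P' h qs"
      using maxscore_in by blast
    have "\<exists>qs'. NE_path qs' \<and> hd qs' = r \<and> score P' h qs \<le> score P h qs'"
    proof (cases "p' \<in> set qs")
      case False
      have "{i. i < length P' \<and> P' ! i \<in> set qs} \<subseteq> {i. i < length P \<and> P ! i \<in> set qs}"
      proof (intro subsetI CollectI conjI)
        fix i assume i: "i \<in> {i. i < length P' \<and> P' ! i \<in> set qs}"
        then show "i < length P" using lenP' by simp
        have "i \<noteq> j" using i False P'j by auto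
        then show "P ! i \<in> set qs" using i P'i by auto
      qed
      then have "score P' h qs \<le> score P h qs" unfolding score_def
        by (intro sum_mono2) auto
      then show ?thesis using qs by blast
    next
      case True
      then obtain pre post where qsplit: "qs = pre @ p' # post" by (meson split_list)
      define qs' where "qs' = (pre @ [p']) @ U"
      have NE1: "NE_path (pre @ [p'])" using qs(1) qsplit NE_prefix[of "pre @ [p']" post] by simp
      have NE2: "NE_path (p' # post)" using qs(1) qsplit NE_suffix[of pre "p' # post"] by simp
      have NEq: "NE_path qs'" unfolding qs'_def U_def
        by (rule NE_append[OF NE1 upath_NE]) (simp add: step_def p'_def)
      have hdq: "hd qs' = r" using qs(2) qsplit by (cases pre) (auto simp: qs'_def)
      have "{i. i < length P' \<and> P' ! i \<in> set qs} \<subseteq> {i. i < length P \<and> P ! i \<in> set qs'}"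
      proof
        fix i assume "i \<in> {i. i < length P' \<and> P' ! i \<in> set qs}"
        then have i: "i < length P" "P' ! i \<in> set qs" using lenP' by auto
        show "i \<in> {i. i < length P \<and> P ! i \<in> set qs'}"
        proof (cases "i = j")
          case True
          then have "P ! i \<in> set U" using inU j by blast
          then show ?thesis using i by (simp add: qs'_def)
        next
          case False
          then have "P ! i \<in> set qs" using i P'i by simp
          then consider "P ! i \<in> set pre" | "P ! i = p'" | "P ! i \<in> set post" using qsplit by auto
          then show ?thesis
          proof cases
            case 3
            then have "P ! i \<in> set (p' # post)" by simp
            then have "fst p' \<le> fst (P ! i) \<and> snd p' \<le> snd (P ! i)"
              using NE_mono[OF NE2] by fastforce
            then have "P ! i \<in> set U" using inU[OF i(1)] by1 by (simp add: p'_def)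
            then show ?thesis using i by (simp add: qs'_def)
          qed (use i in \<open>auto simp: qs'_def\<close>)
        qed
      qed
      then have "score P' h qs \<le> score P h qs'" unfolding score_def using lenP'
        by (intro sum_mono2) auto
      then show ?thesis using NEq hdq by blast
    qed
    then obtain qs' where "NE_path qs'" "hd qs' = r" "score P' h qs \<le> score P h qs'" by blast
    then show ?thesis using qs(3) maxscore_ge[of qs' r P h] by simp
  qed
  define I where "I = {i. i < length P \<and> P ! i \<in> set U}"
  have jI: "j \<in> I" using inU j by (simp add: I_def)
  have finIt: "finite I" by (simp add: I_def)
  have T1: "sum ((!) h) I \<le> maxscore P h (a, Suc y1)"
    using maxscore_ge[of U "(a, Suc y1)" P h] unfolding score_def I_def U_def
    by (simp add: upath_NE)
  have B: "maxscore P' h (a, Suc y1) < maxscore P h (a, Suc y1)"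
  proof -
    obtain qs where qs: "NE_path qs" "hd qs = (a, Suc y1)" "maxscore P' h (a, Suc y1) = score P' h qs"
      using maxscore_in by blast
    have "{i. i < length P' \<and> P' ! i \<in> set qs} \<subseteq> I - {j}"
    proof
      fix i assume "i \<in> {i. i < length P' \<and> P' ! i \<in> set qs}"
      then have i: "i < length P" "P' ! i \<in> set qs" using lenP' by auto
      have m: "a \<le> fst (P' ! i) \<and> Suc y1 \<le> snd (P' ! i)" using NE_mono[OF qs(1) i(2)] qs(2) by simp
      have "i \<noteq> j" using m P'j p'_def by auto
      then have "P ! i \<in> set U" using inU[OF i(1)] m P'i by1 by simp
      then show "i \<in> I - {j}" using i \<open>i \<noteq> j\<close> by (simp add: I_def)
    qed
    then have "score P' h qs \<le> sum ((!) h) (I - {j})" unfolding score_def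
      by (intro sum_mono2) (auto simp: finIt)
    moreover have "sum ((!) h) I = h ! j + sum ((!) h) (I - {j})"
      using sum.remove[OF finIt jI] by simp
    moreover have "h ! j > 0" using fp j by (simp add: floor_plan_def)
    ultimately show ?thesis using qs(3) T1 by linarith
  qed
  have "lam P' h \<subseteq> lam P h" unfolding lam_def using A by (auto intro: less_le_trans)
  moreover have "(a, Suc y1, maxscore P' h (a, Suc y1)) \<in> lam P h - lam P' h"
    unfolding lam_def using B by simp
  ultimately show ?thesis using fp' by blast
qed


definition sw :: "pt \<Rightarrow> pt" where "sw p = (snd p, fst p)"

lemma sw_sw[simp]: "sw (sw p) = p" by (simp add: sw_def)
lemma sw_comp[simp]: "sw \<circ> sw = id" by (rule ext) simp
lemma map_sw_sw[simp]: "map sw (map sw P) = P" by (induction P) auto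
lemma sw_inj: "sw p = sw r \<longleftrightarrow> p = r" by (metis sw_sw)

lemma NE_sw: "NE_path (map sw qs) \<longleftrightarrow> NE_path qs"
  unfolding NE_path_def by (auto simp: sw_def prod_eq_iff)

lemma score_sw: "score (map sw P) h (map sw qs) = score P h qs"
proof -
  have "{i. i < length (map sw P) \<and> map sw P ! i \<in> set (map sw qs)} = {i. i < length P \<and> P ! i \<in> set qs}"
    by (auto simp: sw_inj)
  then show ?thesis unfolding score_def by simp
qed

lemma maxscore_sw: "maxscore (map sw P) h (sw r) = maxscore P h r"
proof -
  have "{score (map sw P) h qs | qs. NE_path qs \<and> hd qs = sw r} = {score P h qs | qs. NE_path qs \<and> hd qs = r}"
  proof (intro equalityI subsetI)
    fix x assume "x \<in> {score (map sw P) h qs | qs. NE_path qs \<and> hd qs = sw r}"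
    then obtain qs where "x = score (map sw P) h qs" "NE_path qs" "hd qs = sw r" by auto
    then show "x \<in> {score P h qs | qs. NE_path qs \<and> hd qs = r}"
    proof -
      have "NE_path (map sw qs)" using NE_sw \<open>NE_path qs\<close> by blast
      moreover have "hd (map sw qs) = r" using \<open>hd qs = sw r\<close> \<open>NE_path qs\<close>
        by (simp add: hd_map NE_path_def)
      moreover have "score P h (map sw qs) = x" using score_sw[of P h "map sw qs"] \<open>x = _\<close> by simp
      ultimately show ?thesis by blast
    qed
  next
    fix x assume "x \<in> {score P h qs | qs. NE_path qs \<and> hd qs = r}"
    then obtain qs where "x = score P h qs" "NE_path qs" "hd qs = r" by auto
    then show "x \<in> {score (map sw P) h qs | qs. NE_path qs \<and> hd qs = sw r}"
    proof -
      have "NE_path (map sw qs)" using NE_sw \<open>NE_path qs\<close> by blast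
      moreover have "hd (map sw qs) = sw r" using \<open>hd qs = r\<close> \<open>NE_path qs\<close>
        by (simp add: hd_map NE_path_def)
      moreover have "score (map sw P) h (map sw qs) = x" using score_sw[of P h qs] \<open>x = _\<close> by simp
      ultimately show ?thesis by blast
    qed
  qed
  then show ?thesis unfolding maxscore_def by simp
qed

definition tw :: "nat \<times> nat \<times> nat \<Rightarrow> nat \<times> nat \<times> nat" where "tw t = (fst (snd t), fst t, snd (snd t))"

lemma lam_sw: "lam (map sw P) h = tw ` lam P h"
proof (intro equalityI subsetI)
  fix t assume "t \<in> lam (map sw P) h"
  then obtain x y z where t: "t = (x, y, z)" "z < maxscore (map sw P) h (x, y)" unfolding lam_def by auto
  then have "z < maxscore P h (y, x)" using maxscore_sw[of P h "(y,x)"] by (simp add: sw_def)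
  then have "(y, x, z) \<in> lam P h" unfolding lam_def by simp
  then show "t \<in> tw ` lam P h" using t by (force simp: tw_def)
next
  fix t assume "t \<in> tw ` lam P h"
  then obtain x y z where t: "t = (y, x, z)" "z < maxscore P h (x, y)" unfolding lam_def tw_def by auto
  then have "z < maxscore (map sw P) h (y, x)" using maxscore_sw[of P h "(x,y)"] by (simp add: sw_def)
  then show "t \<in> lam (map sw P) h" using t unfolding lam_def by simp
qed

lemma tw_inj: "inj tw" unfolding inj_def tw_def by (auto simp: prod_eq_iff)

lemma core2:
  assumes fp: "floor_plan P h" and q: "q \<in> border P h" and qP: "q \<notin> set P"
  shows "\<exists>P'. floor_plan P' h \<and> lam P' h \<subseteq> lam P h \<and> \<not> lam P h \<subseteq> lam P' h"
proof -
  obtain a b where qab: "q = (a, b)" by fastforce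
  have s: "maxscore P h (a, b) > 0" using q qab by (simp add: border_def supp_def)
  consider "\<not> maxscore P h (a + 1, b) > 0" | "\<not> maxscore P h (a, b + 1) > 0"
    using q qab by (auto simp: border_def supp_def)
  then show ?thesis
  proof cases
    case 1 then show ?thesis using core[OF fp s _ ] qP qab by simp
  next
    case 2
    let ?P2 = "map sw P"
    have fp2: "floor_plan ?P2 h" using fp by (simp add: floor_plan_def)
    have s2: "maxscore ?P2 h (b, a) > 0" using s maxscore_sw[of P h "(a,b)"] by (simp add: sw_def)
    have n2: "\<not> maxscore ?P2 h (b + 1, a) > 0" using 2 maxscore_sw[of P h "(a,b+1)"] by (simp add: sw_def)
    have p2: "(b, a) \<notin> set ?P2" using qP qab by (auto simp: sw_def)
    obtain P2' where P2': "floor_plan P2' h" "lam P2' h \<subseteq> lam ?P2 h" "\<not> lam ?P2 h \<subseteq> lam P2' h"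
      using core[OF fp2 s2 n2 p2] by blast
    let ?P' = "map sw P2'"
    have "floor_plan ?P' h" using P2'(1) by (simp add: floor_plan_def)
    moreover have "lam ?P' h = tw ` lam P2' h" by (rule lam_sw)
    moreover have "lam P h = tw ` lam ?P2 h" using lam_sw[of ?P2 h] by simp
    ultimately show ?thesis using P2'(2,3) inj_image_subset_iff[OF tw_inj] by metis
  qed
qed

theorem proposition5p1:
  shows "(\<forall>P h. minimal_floor_plan P h \<longrightarrow> border P h \<subseteq> set P) \<and>
         (\<forall>P Q h. minimal_compatible_floor_plan P Q h \<longrightarrow>
            border P h \<subseteq> set P \<and> border Q h \<subseteq> set Q)"
proof (intro conjI allI impI subsetI)
  fix P h q assume m: "minimal_floor_plan P h" and q: "q \<in> border P h"
  show "q \<in> set P"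
  proof (rule ccontr)
    assume "q \<notin> set P"
    then obtain P' where "floor_plan P' h" "lam P' h \<subseteq> lam P h" "\<not> lam P h \<subseteq> lam P' h"
      using core2 m q by (meson minimal_floor_plan_def)
    then show False using m by (auto simp: minimal_floor_plan_def fp_le_def)
  qed
next
  fix P Q h q assume m: "minimal_compatible_floor_plan P Q h" and q: "q \<in> border P h"
  show "q \<in> set P"
  proof (rule ccontr)
    assume "q \<notin> set P"
    then obtain P' where P': "floor_plan P' h" "lam P' h \<subseteq> lam P h" "\<not> lam P h \<subseteq> lam P' h"
      using core2 m q by (meson minimal_compatible_floor_plan_def compatible_floor_plan_def)
    have "card (lam P' h \<inter> lam Q h) \<le> card (lam P h \<inter> lam Q h)"
      using P'(2) finite_lam[of P h] by (intro card_mono) auto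
    then have "cfp_le P' Q P Q h" using P'(2) by (simp add: cfp_le_def)
    moreover have "compatible_floor_plan P' Q h"
      using P'(1) m by (simp add: minimal_compatible_floor_plan_def compatible_floor_plan_def)
    ultimately have "cfp_le P Q P' Q h" using m unfolding minimal_compatible_floor_plan_def by blast
    then show False using P'(3) by (simp add: cfp_le_def)
  qed
next
  fix P Q h q assume m: "minimal_compatible_floor_plan P Q h" and q: "q \<in> border Q h"
  show "q \<in> set Q"
  proof (rule ccontr)
    assume "q \<notin> set Q"
    then obtain Q' where Q': "floor_plan Q' h" "lam Q' h \<subseteq> lam Q h" "\<not> lam Q h \<subseteq> lam Q' h"
      using core2 m q by (meson minimal_compatible_floor_plan_def compatible_floor_plan_def)
    have "card (lam P h \<inter> lam Q' h) \<le> card (lam P h \<inter> lam Q h)"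
      using Q'(2) finite_lam[of P h] by (intro card_mono) auto
    then have "cfp_le P Q' P Q h" using Q'(2) by (simp add: cfp_le_def)
    moreover have "compatible_floor_plan P Q' h"
      using Q'(1) m by (simp add: minimal_compatible_floor_plan_def compatible_floor_plan_def)
    ultimately have "cfp_le P Q P Q' h" using m unfolding minimal_compatible_floor_plan_def by blast
    then show False using Q'(3) by (simp add: cfp_le_def)
  qed
qed

end
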